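(* Let $\epsilon\in(0,1)$ and let $h>0$ be arbitrary. Then there exists an initial value $u_0\in\mathbb{R}$ such that the sequence $(u_n)_{n\ge 0}$ generated by the explicit Euler scheme $$\frac{u_n-u_{n-1}}{h}+\frac{1}{\epsilon^2}\big(u_{n-1}^3-u_{n-1}\big)=0,\qquad n\ge 1,$$ converges to an incorrect steady state, i.e. $\lim_{n\to\infty}u_n$ exists and $\lim_{n\to\infty}u_n\neq \mathrm{sign}(u_0)$.
   Context: The scheme discretizes the ODE $u'(t)+\frac{1}{\epsilon^2}(u^3-u)=0$, $u(0)=u_0$, whose exact solution converges to $\mathrm{sign}(u_0)\in\{-1,0,1\}$ as $t\to\infty$ (with $\mathrm{sign}(0)=0$). A numerical solution is said to converge to the correct steady state if $\lim_{n\to\infty}u_n=\mathrm{sign}(u_0)$. *)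

theory Defs
  imports Complex_Main
begin

fun euler_seq :: "real \<Rightarrow> real \<Rightarrow> real \<Rightarrow> nat \<Rightarrow> real" where
  "euler_seq eps h u0 0 = u0"
| "euler_seq eps h u0 (Suc n) =
     euler_seq eps h u0 n - h / eps^2 * ((euler_seq eps h u0 n)^3 - euler_seq eps h u0 n)"

end

theory Submission
  imports Defs
begin

theorem lemma2p1:
  fixes eps h :: real
  assumes "0 < eps" and "eps < 1" and "0 < h"
  shows "\<exists>u0 :: real. \<exists>L :: real.
           euler_seq eps h u0 \<longlonglongrightarrow> L \<and> L \<noteq> sgn u0"
proof -
  define k where "k = h / eps^2"
  have kpos: "k > 0" using assms by (simp add: k_def)
  define a where "a = sqrt ((1 + k) / k)"
  have apos: "a > 0" using kpos by (simp add: a_def)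
  have a2: "a^2 = (1 + k) / k" using kpos by (simp add: a_def)
  have "a - k * (a^3 - a) = a * (1 + k - k * a^2)"
    by (simp add: algebra_simps power3_eq_cube power2_eq_square)
  also have "k * a^2 = 1 + k" using a2 kpos by simp
  finally have s1: "euler_seq eps h a 1 = 0" by (simp add: k_def)
  have z: "euler_seq eps h a (Suc n) = 0" for n
    by (induction n) (use s1 in auto)
  have "eventually (\<lambda>n. euler_seq eps h a n = 0) sequentially"
    unfolding eventually_sequentially
  proof (intro exI allI impI)
    fix n :: nat assume "1 \<le> n"
    then obtain m where "n = Suc m" using Suc_le_D by force
    then show "euler_seq eps h a n = 0" using z by simp
  qed
  then have "euler_seq eps h a \<longlonglongrightarrow> 0" by (rule tendsto_eventually)
  moreover have "sgn a \<noteq> 0" using apos by simp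
  ultimately show ?thesis by metis
qed

end
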